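(* Let $\mathbf D$ be a maximal (by inclusion) clique of tilings, i.e. a set of pairwise compatible tilings not properly contained in another set of pairwise compatible tilings. Then $\mathbf D$ is a distributive sublattice of the poset of tilings ordered by inclusion; that is, $\mathbf D$ is closed under $\cap$ and $\cup$.
   Context: Fix an integer $n\ge 3$ and write $[n]=\{1,\dots,n\}$. Let $\Lambda$ be the set of 3-element subsets of $[n]$; a triple $\{i,j,k\}$ with $i<j<k$ is written $ijk$. For a 4-element subset $F=\{i<j<k<l\}$ of $[n]$, the stick of $F$ is the sequence $(ijk,\ ijl,\ ikl,\ jkl)$. A tiling (the inversion set of a rhombus tiling of the zonogon $Z(n;2)$) is a subset $T\subseteq\Lambda$ such that for every 4-element $F\subseteq[n]$, $T\cap\mathrm{stick}(F)$ is an initial segment or a final segment of the stick (empty set and whole stick allowed). Two tilings $T,T'$ are compatible if both $T\cap T'$ and $T\cup T'$ are tilings. *)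

theory Defs
  imports Main
begin

definition Lambda :: "nat \<Rightarrow> nat set set" where
  "Lambda n = {S. S \<subseteq> {1..n} \<and> card S = 3}"

definition stick :: "nat \<Rightarrow> nat \<Rightarrow> nat \<Rightarrow> nat \<Rightarrow> nat set list" where
  "stick i j k l = [{i,j,k}, {i,j,l}, {i,k,l}, {j,k,l}]"

definition is_tiling :: "nat \<Rightarrow> nat set set \<Rightarrow> bool" where
  "is_tiling n T \<longleftrightarrow> T \<subseteq> Lambda n \<and>
     (\<forall>i j k l. 1 \<le> i \<and> i < j \<and> j < k \<and> k < l \<and> l \<le> n \<longrightarrow>
        (\<exists>m \<le> 4. T \<inter> set (stick i j k l) = set (take m (stick i j k l))
                \<or> T \<inter> set (stick i j k l) = set (drop m (stick i j k l))))"

definition compatible :: "nat \<Rightarrow> nat set set \<Rightarrow> nat set set \<Rightarrow> bool" where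
  "compatible n T T' \<longleftrightarrow> is_tiling n (T \<inter> T') \<and> is_tiling n (T \<union> T')"

definition is_clique :: "nat \<Rightarrow> nat set set set \<Rightarrow> bool" where
  "is_clique n D \<longleftrightarrow> (\<forall>T\<in>D. is_tiling n T) \<and> (\<forall>T\<in>D. \<forall>T'\<in>D. compatible n T T')"

definition is_maximal_clique :: "nat \<Rightarrow> nat set set set \<Rightarrow> bool" where
  "is_maximal_clique n D \<longleftrightarrow> is_clique n D \<and> (\<forall>D'. is_clique n D' \<and> D \<subseteq> D' \<longrightarrow> D' = D)"

end

theory Submission
  imports Defs
begin

lemma ne: "x \<in> A \<Longrightarrow> x \<notin> B \<Longrightarrow> A \<noteq> B" by blast
lemma stick_distinct:
  assumes "i < j" "j < k" "k < l"
  shows "distinct (stick i j k l)"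
proof -
  have 1: "{i,j,k} \<noteq> {i,j,l}" by (rule ne[of k]) (use assms in auto)
  have 2: "{i,j,k} \<noteq> {i,k,l}" by (rule ne[of j]) (use assms in auto)
  have 3: "{i,j,k} \<noteq> {j,k,l}" by (rule ne[of i]) (use assms in auto)
  have 4: "{i,j,l} \<noteq> {i,k,l}" by (rule ne[of j]) (use assms in auto)
  have 5: "{i,j,l} \<noteq> {j,k,l}" by (rule ne[of i]) (use assms in auto)
  have 6: "{i,k,l} \<noteq> {j,k,l}" by (rule ne[of i]) (use assms in auto)
  show ?thesis unfolding stick_def using 1 2 3 4 5 6 by (simp only: distinct.simps set_simps insert_iff empty_iff) blast
qed

definition P4 :: "bool \<Rightarrow> bool \<Rightarrow> bool \<Rightarrow> bool \<Rightarrow> bool" where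
  "P4 w x y z \<longleftrightarrow> ((x \<longrightarrow> w) \<and> (y \<longrightarrow> x) \<and> (z \<longrightarrow> y)) \<or> ((w \<longrightarrow> x) \<and> (x \<longrightarrow> y) \<and> (y \<longrightarrow> z))"

lemma mem_take: "distinct L \<Longrightarrow> i < length L \<Longrightarrow> (L!i \<in> set (take m L)) = (i < m)"
proof -
  assume d: "distinct L" and i: "i < length L"
  have "(L!i \<in> set (take m L)) = (\<exists>j<min m (length L). L!j = L!i)"
    by (auto simp: in_set_conv_nth)
  also have "\<dots> = (i < m)" using d i nth_eq_iff_index_eq[OF d] by auto
  finally show ?thesis .
qed

lemma mem_drop: "distinct L \<Longrightarrow> i < length L \<Longrightarrow> (L!i \<in> set (drop m L)) = (m \<le> i)"
proof -
  assume d: "distinct L" and i: "i < length L"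
  have "(L!i \<in> set (drop m L)) = (\<exists>j. j < length L - m \<and> L!(m+j) = L!i)"
    by (auto simp: in_set_conv_nth)
  also have "\<dots> = (\<exists>j. j < length L - m \<and> m+j = i)"
    using i nth_eq_iff_index_eq[OF d] by (intro ex_cong1) auto
  also have "\<dots> = (m \<le> i)" using i
    by (auto intro!: exI[of _ "i - m"])
  finally show ?thesis .
qed

lemma take_char: assumes "distinct L"
  shows "(T \<inter> set L = set (take m L)) \<longleftrightarrow> (\<forall>i<length L. (L!i \<in> T) = (i<m))"
proof -
  have "(T \<inter> set L = set (take m L)) \<longleftrightarrow> (\<forall>x\<in>set L. (x \<in> T) = (x \<in> set (take m L)))"
    using set_take_subset[of m L] by blast
  also have "\<dots> \<longleftrightarrow> (\<forall>i<length L. (L!i \<in> T) = (L!i \<in> set (take m L)))"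
    by (metis in_set_conv_nth)
  also have "\<dots> \<longleftrightarrow> (\<forall>i<length L. (L!i \<in> T) = (i<m))"
    using mem_take[OF assms] by simp
  finally show ?thesis .
qed
lemma drop_char: assumes "distinct L"
  shows "(T \<inter> set L = set (drop m L)) \<longleftrightarrow> (\<forall>i<length L. (L!i \<in> T) = (m\<le>i))"
proof -
  have "(T \<inter> set L = set (drop m L)) \<longleftrightarrow> (\<forall>x\<in>set L. (x \<in> T) = (x \<in> set (drop m L)))"
    using set_drop_subset[of m L] by blast
  also have "\<dots> \<longleftrightarrow> (\<forall>i<length L. (L!i \<in> T) = (L!i \<in> set (drop m L)))"
    by (metis in_set_conv_nth)
  also have "\<dots> \<longleftrightarrow> (\<forall>i<length L. (L!i \<in> T) = (m\<le>i))"
    using mem_drop[OF assms] by simp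
  finally show ?thesis .
qed

lemma all4: "(\<forall>i<(4::nat). Q i) \<longleftrightarrow> Q 0 \<and> Q 1 \<and> Q 2 \<and> Q 3"
  by (auto simp: less_Suc_eq numeral_eq_Suc)

lemma all4L: "(\<forall>i<length [a,b,c,d]. Q i) \<longleftrightarrow> Q 0 \<and> Q 1 \<and> Q 2 \<and> Q 3"
  by (auto simp: less_Suc_eq numeral_2_eq_2 numeral_3_eq_3)

lemma ex4: "(\<exists>m \<le> (4::nat). Q m) \<longleftrightarrow> Q 0 \<or> Q 1 \<or> Q 2 \<or> Q 3 \<or> Q 4"
  by (auto simp: le_Suc_eq numeral_eq_Suc)

lemma good_iff:
  assumes "distinct [a,b,c,d]"
  shows "(\<exists>m \<le> 4. T \<inter> set [a,b,c,d] = set (take m [a,b,c,d])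
            \<or> T \<inter> set [a,b,c,d] = set (drop m [a,b,c,d]))
         \<longleftrightarrow> P4 (a\<in>T) (b\<in>T) (c\<in>T) (d\<in>T)"
  unfolding take_char[OF assms] drop_char[OF assms]
  unfolding take_char[OF assms] drop_char[OF assms] all4L ex4
  by (cases "a\<in>T"; cases "b\<in>T"; cases "c\<in>T"; cases "d\<in>T") (simp_all add: P4_def)
lemma tiling_iff:
  "is_tiling n T \<longleftrightarrow> T \<subseteq> Lambda n \<and>
     (\<forall>i j k l. 1 \<le> i \<and> i < j \<and> j < k \<and> k < l \<and> l \<le> n \<longrightarrow>
        P4 ({i,j,k}\<in>T) ({i,j,l}\<in>T) ({i,k,l}\<in>T) ({j,k,l}\<in>T))"
proof -
  have e: "(\<exists>m \<le> 4. T \<inter> set (stick i j k l) = set (take m (stick i j k l))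
                \<or> T \<inter> set (stick i j k l) = set (drop m (stick i j k l)))
        \<longleftrightarrow> P4 ({i,j,k}\<in>T) ({i,j,l}\<in>T) ({i,k,l}\<in>T) ({j,k,l}\<in>T)"
    if "i < j" "j < k" "k < l" for i j k l
  proof -
    have "distinct [{i,j,k}, {i,j,l}, {i,k,l}, {j,k,l}]"
      using stick_distinct[OF that] unfolding stick_def .
    from good_iff[OF this, of T] show ?thesis unfolding stick_def .
  qed
  show ?thesis unfolding is_tiling_def
  proof (intro conj_cong refl iff_allI imp_cong)
    fix i j k l assume "1 \<le> i \<and> i < j \<and> j < k \<and> k < l \<and> l \<le> n"
    then show "(\<exists>m \<le> 4. T \<inter> set (stick i j k l) = set (take m (stick i j k l))
                \<or> T \<inter> set (stick i j k l) = set (drop m (stick i j k l)))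
        \<longleftrightarrow> P4 ({i,j,k}\<in>T) ({i,j,l}\<in>T) ({i,k,l}\<in>T) ({j,k,l}\<in>T)"
      using e by blast
  qed
qed
lemma key:
  assumes "P4 x1 x2 x3 x4" "P4 y1 y2 y3 y4" "P4 z1 z2 z3 z4"
    "P4 (x1\<and>y1) (x2\<and>y2) (x3\<and>y3) (x4\<and>y4)" "P4 (x1\<or>y1) (x2\<or>y2) (x3\<or>y3) (x4\<or>y4)"
    "P4 (x1\<and>z1) (x2\<and>z2) (x3\<and>z3) (x4\<and>z4)" "P4 (x1\<or>z1) (x2\<or>z2) (x3\<or>z3) (x4\<or>z4)"
    "P4 (z1\<and>y1) (z2\<and>y2) (z3\<and>y3) (z4\<and>y4)" "P4 (z1\<or>y1) (z2\<or>y2) (z3\<or>y3) (z4\<or>y4)"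
  shows "P4 (x1\<and>y1\<and>z1) (x2\<and>y2\<and>z2) (x3\<and>y3\<and>z3) (x4\<and>y4\<and>z4) \<and>
         P4 ((x1\<and>y1)\<or>z1) ((x2\<and>y2)\<or>z2) ((x3\<and>y3)\<or>z3) ((x4\<and>y4)\<or>z4)"
  using assms unfolding P4_def by sat

lemma key2:
  assumes "P4 x1 x2 x3 x4" "P4 y1 y2 y3 y4" "P4 z1 z2 z3 z4"
    "P4 (x1\<and>y1) (x2\<and>y2) (x3\<and>y3) (x4\<and>y4)" "P4 (x1\<or>y1) (x2\<or>y2) (x3\<or>y3) (x4\<or>y4)"
    "P4 (x1\<and>z1) (x2\<and>z2) (x3\<and>z3) (x4\<and>z4)" "P4 (x1\<or>z1) (x2\<or>z2) (x3\<or>z3) (x4\<or>z4)"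
    "P4 (z1\<and>y1) (z2\<and>y2) (z3\<and>y3) (z4\<and>y4)" "P4 (z1\<or>y1) (z2\<or>y2) (z3\<or>y3) (z4\<or>y4)"
  shows "P4 ((x1\<or>y1)\<and>z1) ((x2\<or>y2)\<and>z2) ((x3\<or>y3)\<and>z3) ((x4\<or>y4)\<and>z4) \<and>
         P4 (x1\<or>y1\<or>z1) (x2\<or>y2\<or>z2) (x3\<or>y3\<or>z3) (x4\<or>y4\<or>z4)"
  using assms unfolding P4_def by sat

lemma compat_int:
  assumes "is_clique n D" "T \<in> D" "T' \<in> D" "S \<in> D"
  shows "compatible n (T \<inter> T') S"
proof -
  have t: "is_tiling n X" "is_tiling n (X \<inter> Y)" "is_tiling n (X \<union> Y)"
    if "X \<in> D" "Y \<in> D" for X Y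
    using assms(1) that unfolding is_clique_def compatible_def by auto
  show ?thesis
    unfolding compatible_def tiling_iff
  proof (intro conjI allI impI)
    show "T \<inter> T' \<inter> S \<subseteq> Lambda n" using t(1)[OF assms(2,2)] unfolding tiling_iff by auto
    show "T \<inter> T' \<union> S \<subseteq> Lambda n" using t(1)[OF assms(2,2)] t(1)[OF assms(4,4)]
      unfolding tiling_iff by auto
    fix i j k l :: nat
    assume h: "1 \<le> i \<and> i < j \<and> j < k \<and> k < l \<and> l \<le> n"
    note K = key[of "{i,j,k}\<in>T" "{i,j,l}\<in>T" "{i,k,l}\<in>T" "{j,k,l}\<in>T"
                    "{i,j,k}\<in>T'" "{i,j,l}\<in>T'" "{i,k,l}\<in>T'" "{j,k,l}\<in>T'"
                    "{i,j,k}\<in>S" "{i,j,l}\<in>S" "{i,k,l}\<in>S" "{j,k,l}\<in>S"]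
    have A: "P4 ({i,j,k}\<in>X) ({i,j,l}\<in>X) ({i,k,l}\<in>X) ({j,k,l}\<in>X)"
      if "is_tiling n X" for X using that h unfolding tiling_iff by blast
    have r: "P4 ({i, j, k} \<in> T \<inter> T' \<inter> S) ({i, j, l} \<in> T \<inter> T' \<inter> S) ({i, k, l} \<in> T \<inter> T' \<inter> S)
        ({j, k, l} \<in> T \<inter> T' \<inter> S) \<and>
      P4 ({i, j, k} \<in> T \<inter> T' \<union> S) ({i, j, l} \<in> T \<inter> T' \<union> S) ({i, k, l} \<in> T \<inter> T' \<union> S)
        ({j, k, l} \<in> T \<inter> T' \<union> S)"
      using K A[OF t(1)[OF assms(2,2)]] A[OF t(1)[OF assms(3,3)]] A[OF t(1)[OF assms(4,4)]]
        A[OF t(2)[OF assms(2,3)]] A[OF t(3)[OF assms(2,3)]]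
        A[OF t(2)[OF assms(2,4)]] A[OF t(3)[OF assms(2,4)]]
        A[OF t(2)[OF assms(4,3)]] A[OF t(3)[OF assms(4,3)]]
      by simp
    then show "P4 ({i, j, k} \<in> T \<inter> T' \<inter> S) ({i, j, l} \<in> T \<inter> T' \<inter> S) ({i, k, l} \<in> T \<inter> T' \<inter> S)
        ({j, k, l} \<in> T \<inter> T' \<inter> S)" by blast
    from r show "P4 ({i, j, k} \<in> T \<inter> T' \<union> S) ({i, j, l} \<in> T \<inter> T' \<union> S) ({i, k, l} \<in> T \<inter> T' \<union> S)
        ({j, k, l} \<in> T \<inter> T' \<union> S)" by blast
  qed
qed

lemma compat_un:
  assumes "is_clique n D" "T \<in> D" "T' \<in> D" "S \<in> D"
  shows "compatible n ((T \<union> T')) S"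
proof -
  have t: "is_tiling n X" "is_tiling n (X \<inter> Y)" "is_tiling n (X \<union> Y)"
    if "X \<in> D" "Y \<in> D" for X Y
    using assms(1) that unfolding is_clique_def compatible_def by auto
  show ?thesis
    unfolding compatible_def tiling_iff
  proof (intro conjI allI impI)
    show "(T \<union> T') \<inter> S \<subseteq> Lambda n" using t(1)[OF assms(2,2)] t(1)[OF assms(3,3)] t(1)[OF assms(4,4)] unfolding tiling_iff by auto
    show "(T \<union> T') \<union> S \<subseteq> Lambda n" using t(1)[OF assms(2,2)] t(1)[OF assms(3,3)] t(1)[OF assms(4,4)]
      unfolding tiling_iff by auto
    fix i j k l :: nat
    assume h: "1 \<le> i \<and> i < j \<and> j < k \<and> k < l \<and> l \<le> n"
    note K = key2[of "{i,j,k}\<in>T" "{i,j,l}\<in>T" "{i,k,l}\<in>T" "{j,k,l}\<in>T"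
                    "{i,j,k}\<in>T'" "{i,j,l}\<in>T'" "{i,k,l}\<in>T'" "{j,k,l}\<in>T'"
                    "{i,j,k}\<in>S" "{i,j,l}\<in>S" "{i,k,l}\<in>S" "{j,k,l}\<in>S"]
    have A: "P4 ({i,j,k}\<in>X) ({i,j,l}\<in>X) ({i,k,l}\<in>X) ({j,k,l}\<in>X)"
      if "is_tiling n X" for X using that h unfolding tiling_iff by blast
    have r: "P4 ({i, j, k} \<in> (T \<union> T') \<inter> S) ({i, j, l} \<in> (T \<union> T') \<inter> S) ({i, k, l} \<in> (T \<union> T') \<inter> S)
        ({j, k, l} \<in> (T \<union> T') \<inter> S) \<and>
      P4 ({i, j, k} \<in> (T \<union> T') \<union> S) ({i, j, l} \<in> (T \<union> T') \<union> S) ({i, k, l} \<in> (T \<union> T') \<union> S)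
        ({j, k, l} \<in> (T \<union> T') \<union> S)"
      using K A[OF t(1)[OF assms(2,2)]] A[OF t(1)[OF assms(3,3)]] A[OF t(1)[OF assms(4,4)]]
        A[OF t(2)[OF assms(2,3)]] A[OF t(3)[OF assms(2,3)]]
        A[OF t(2)[OF assms(2,4)]] A[OF t(3)[OF assms(2,4)]]
        A[OF t(2)[OF assms(4,3)]] A[OF t(3)[OF assms(4,3)]]
      by simp
    then show "P4 ({i, j, k} \<in> (T \<union> T') \<inter> S) ({i, j, l} \<in> (T \<union> T') \<inter> S) ({i, k, l} \<in> (T \<union> T') \<inter> S)
        ({j, k, l} \<in> (T \<union> T') \<inter> S)" by blast
    from r show "P4 ({i, j, k} \<in> (T \<union> T') \<union> S) ({i, j, l} \<in> (T \<union> T') \<union> S) ({i, k, l} \<in> (T \<union> T') \<union> S)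
        ({j, k, l} \<in> (T \<union> T') \<union> S)" by blast
  qed
qed

lemma compat_sym: "compatible n A B \<Longrightarrow> compatible n B A"
  unfolding compatible_def by (simp add: Int_commute Un_commute)

lemma compat_self: "is_tiling n A \<Longrightarrow> compatible n A A"
  unfolding compatible_def by simp

lemma int_in:
  assumes "is_maximal_clique n D" "T \<in> D" "T' \<in> D"
  shows "T \<inter> T' \<in> D"
proof -
  have c: "is_clique n D" using assms(1) unfolding is_maximal_clique_def by blast
  have ti: "is_tiling n (T \<inter> T')" using c assms unfolding is_clique_def compatible_def by blast
  have "is_clique n (insert (T \<inter> T') D)"
    using c ti compat_int[OF c assms(2,3)] compat_sym compat_self
    unfolding is_clique_def by auto
  then have "insert (T \<inter> T') D = D" using assms(1) unfolding is_maximal_clique_def by blast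
  then show ?thesis by blast
qed

lemma un_in:
  assumes "is_maximal_clique n D" "T \<in> D" "T' \<in> D"
  shows "T \<union> T' \<in> D"
proof -
  have c: "is_clique n D" using assms(1) unfolding is_maximal_clique_def by blast
  have ti: "is_tiling n (T \<union> T')" using c assms unfolding is_clique_def compatible_def by blast
  have "is_clique n (insert (T \<union> T') D)"
    using c ti compat_un[OF c assms(2,3)] compat_sym compat_self
    unfolding is_clique_def by auto
  then have "insert (T \<union> T') D = D" using assms(1) unfolding is_maximal_clique_def by blast
  then show ?thesis by blast
qed

theorem mainTheorem10:
  fixes n :: nat and D :: "nat set set set"
  assumes "n \<ge> 3"
    and "is_maximal_clique n D"
  shows "\<forall>T\<in>D. \<forall>T'\<in>D. T \<inter> T' \<in> D \<and> T \<union> T' \<in> D"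
  using int_in[OF assms(2)] un_in[OF assms(2)] by blast

end
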